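(* Let $k$ be a field of characteristic $p\ge 0$ with algebraic closure $\overline k$. Let $$\sigma(x)=\sum_{i=d}^{\infty}\alpha_i x^i\in\overline k((x)),$$ with $d\in\mathbb Z$ and $\alpha_i\in\overline k$ for all $i$, and let $L=k(\{\alpha_i\})\subset\overline k$ be the field generated over $k$ by the coefficients of $\sigma$. Then $\sigma(x)$ is algebraic over $k((x))$ if and only if there exists $n\in\mathbb N$ such that $[kL^{p^n}:k]<\infty$, where $kL^{p^n}$ denotes the compositum of $k$ and $L^{p^n}$ in $\overline k$.
   Context: For a field $L$ of characteristic $p>0$ and $n\in\mathbb N$, $L^{p^n}=\{f^{p^n}\mid f\in L\}$; if the characteristic is $0$, set $L^{p^n}=L$ for all $n$. $\overline k((x))$ denotes the field of formal Laurent series in $x$ with coefficients in $\overline k$. *)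

theory Defs
  imports "HOL-Computational_Algebra.Computational_Algebra"
begin

definition is_subfield :: "'a::field set \<Rightarrow> bool" where
  "is_subfield S \<longleftrightarrow> 0 \<in> S \<and> 1 \<in> S \<and>
     (\<forall>x\<in>S. \<forall>y\<in>S. x + y \<in> S \<and> x - y \<in> S \<and> x * y \<in> S) \<and>
     (\<forall>x\<in>S. inverse x \<in> S)"

definition gen_field :: "'a::field set \<Rightarrow> 'a set" where
  "gen_field A = \<Inter>{S. is_subfield S \<and> A \<subseteq> S}"

definition algebraic_over :: "'a::field set \<Rightarrow> 'a \<Rightarrow> bool" where
  "algebraic_over K x \<longleftrightarrow>
     (\<exists>q :: 'a poly. q \<noteq> 0 \<and> (\<forall>i. coeff q i \<in> K) \<and> poly q x = 0)"

(* [M : K] < infinity : M is a finite-dimensional K-vector space *)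
definition finite_degree :: "'a::field set \<Rightarrow> 'a set \<Rightarrow> bool" where
  "finite_degree K M \<longleftrightarrow>
     (\<exists>B. finite B \<and> B \<subseteq> M \<and>
        M \<subseteq> {\<Sum>b\<in>B. c b * b | c. \<forall>b\<in>B. c b \<in> K})"

(* L^{p^n}, with p the characteristic; L^{p^n} = L in characteristic 0 *)
definition frob_pow_set :: "nat \<Rightarrow> 'a::field set \<Rightarrow> 'a set" where
  "frob_pow_set n L =
     (if CHAR('a) = 0 then L else (\<lambda>f. f ^ (CHAR('a) ^ n)) ` L)"

(* k((x)) inside kbar((x)): Laurent series with all coefficients in K *)
definition laurent_over :: "'a::field set \<Rightarrow> 'a fls set" where
  "laurent_over K = {f. \<forall>i. fls_nth f i \<in> K}"

end

theory Submission
  imports Defs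
begin

unbundle fps_syntax


lemma subfieldD:
  assumes "is_subfield S"
  shows "0 \<in> S" "1 \<in> S" "x \<in> S \<Longrightarrow> y \<in> S \<Longrightarrow> x + y \<in> S"
    "x \<in> S \<Longrightarrow> y \<in> S \<Longrightarrow> x - y \<in> S" "x \<in> S \<Longrightarrow> y \<in> S \<Longrightarrow> x * y \<in> S"
    "x \<in> S \<Longrightarrow> inverse x \<in> S"
  using assms unfolding is_subfield_def by auto

lemma subfield_uminus: "is_subfield S \<Longrightarrow> x \<in> S \<Longrightarrow> - x \<in> S"
  by (metis diff_0 subfieldD(1,4))

lemma subfield_divide: "is_subfield S \<Longrightarrow> x \<in> S \<Longrightarrow> y \<in> S \<Longrightarrow> x / y \<in> S"
  by (simp add: divide_inverse subfieldD(5,6))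

lemma subfield_power: "is_subfield S \<Longrightarrow> x \<in> S \<Longrightarrow> x ^ n \<in> S"
  by (induction n) (auto intro: subfieldD)

lemma subfield_sum: "is_subfield S \<Longrightarrow> (\<And>i. i \<in> A \<Longrightarrow> f i \<in> S) \<Longrightarrow> sum f A \<in> S"
  by (induction A rule: infinite_finite_induct) (auto intro: subfieldD)

lemma subfield_of_nat: "is_subfield S \<Longrightarrow> of_nat n \<in> S"
  by (induction n) (auto intro: subfieldD)

lemma gen_field_subfield: "is_subfield (gen_field A)"
  unfolding gen_field_def is_subfield_def by auto

lemma gen_field_sup: "A \<subseteq> gen_field A"
  unfolding gen_field_def by auto

lemma gen_field_least: "is_subfield S \<Longrightarrow> A \<subseteq> S \<Longrightarrow> gen_field A \<subseteq> S"
  unfolding gen_field_def by auto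

definition lspan :: "'a::field set \<Rightarrow> 'a set \<Rightarrow> 'a set" where
  "lspan K B = {\<Sum>b\<in>B. c b * b | c. \<forall>b\<in>B. c b \<in> K}"

lemma finite_degree_lspan: "finite_degree K M \<longleftrightarrow> (\<exists>B. finite B \<and> B \<subseteq> M \<and> M \<subseteq> lspan K B)"
  unfolding finite_degree_def lspan_def by auto

lemma lspanI: "(\<And>b. b \<in> B \<Longrightarrow> c b \<in> K) \<Longrightarrow> (\<Sum>b\<in>B. c b * b) \<in> lspan K B"
  unfolding lspan_def by blast

lemma lspanI': "(\<And>b. b \<in> B \<Longrightarrow> c b \<in> K) \<Longrightarrow> x = (\<Sum>b\<in>B. c b * b) \<Longrightarrow> x \<in> lspan K B"
  using lspanI by blast

lemma lspan_zero: "is_subfield K \<Longrightarrow> 0 \<in> lspan K B"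
  unfolding lspan_def by (rule CollectI, rule exI[of _ "\<lambda>_. 0"]) (auto intro: subfieldD)

lemma lspan_add:
  assumes K: "is_subfield K" and x: "x \<in> lspan K B" and y: "y \<in> lspan K B"
  shows "x + y \<in> lspan K B"
proof -
  obtain c where c: "x = (\<Sum>b\<in>B. c b * b)" "\<forall>b\<in>B. c b \<in> K" using x unfolding lspan_def by auto
  obtain d where d: "y = (\<Sum>b\<in>B. d b * b)" "\<forall>b\<in>B. d b \<in> K" using y unfolding lspan_def by auto
  show ?thesis
    by (rule lspanI'[where c="\<lambda>b. c b + d b"]) (use c d K in \<open>auto intro: subfieldD simp: sum.distrib distrib_right\<close>)
qed

lemma lspan_smult:
  assumes K: "is_subfield K" and x: "x \<in> lspan K B" and a: "a \<in> K"
  shows "a * x \<in> lspan K B"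
proof -
  obtain c where c: "x = (\<Sum>b\<in>B. c b * b)" "\<forall>b\<in>B. c b \<in> K" using x unfolding lspan_def by auto
  show ?thesis
    by (rule lspanI'[where c="\<lambda>b. a * c b"]) (use c a K in \<open>auto intro: subfieldD simp: sum_distrib_left mult.assoc\<close>)
qed

lemma lspan_gen:
  assumes K: "is_subfield K" and "finite B" "b \<in> B"
  shows "b \<in> lspan K B"
proof -
  have "b = (\<Sum>b'\<in>B. (if b' = b then 1 else 0) * b')"
  proof -
    have "(\<Sum>b'\<in>B. (if b' = b then 1 else 0) * b') = (\<Sum>b'\<in>B. if b' = b then b' else 0)"
      by (rule sum.cong) auto
    also have "\<dots> = b" using assms(2,3) by (simp add: sum.delta')
    finally show ?thesis by simp
  qed
  then show ?thesis
    by (rule lspanI'[rotated]) (use K in \<open>auto intro: subfieldD\<close>)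
qed

lemma lspan_sum:
  assumes K: "is_subfield K" and "\<And>i. i \<in> I \<Longrightarrow> f i \<in> lspan K B"
  shows "sum f I \<in> lspan K B"
  using assms(2) by (induction I rule: infinite_finite_induct) (auto intro: lspan_add lspan_zero K)

lemma lspan_diff:
  assumes K: "is_subfield K" and x: "x \<in> lspan K B" and y: "y \<in> lspan K B"
  shows "x - y \<in> lspan K B"
proof -
  have "(-1) * y \<in> lspan K B" by (rule lspan_smult[OF K y]) (meson K subfieldD(2) subfield_uminus)
  then show ?thesis using lspan_add[OF K x, of "-y"] by simp
qed

lemma lspan_mono_sub:
  assumes K: "is_subfield K" and "\<And>b. b \<in> B \<Longrightarrow> b \<in> lspan K C"
  shows "lspan K B \<subseteq> lspan K C"
proof
  fix x assume "x \<in> lspan K B"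
  then obtain c where c: "x = (\<Sum>b\<in>B. c b * b)" "\<forall>b\<in>B. c b \<in> K" unfolding lspan_def by auto
  show "x \<in> lspan K C" unfolding c(1) by (rule lspan_sum[OF K]) (use c assms in \<open>auto intro: lspan_smult\<close>)
qed

lemma lspan_mono: "is_subfield K \<Longrightarrow> finite C \<Longrightarrow> B \<subseteq> C \<Longrightarrow> lspan K B \<subseteq> lspan K C"
  by (rule lspan_mono_sub) (auto intro: lspan_gen)

lemma lspan_subfield_mono:
  assumes "K \<subseteq> K'" shows "lspan K B \<subseteq> lspan K' B"
  using assms unfolding lspan_def by blast


lemma lspan_empty: "is_subfield K \<Longrightarrow> lspan K {} = {0}"
  unfolding lspan_def by (auto intro: subfieldD)

lemma lspan_insert_decomp:
  assumes K: "is_subfield K" and "finite B" "b \<notin> B" "x \<in> lspan K (insert b B)"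
  shows "\<exists>e w. e \<in> K \<and> w \<in> lspan K B \<and> x = e * b + w"
proof -
  obtain c where c: "x = (\<Sum>y\<in>insert b B. c y * y)" "\<forall>y\<in>insert b B. c y \<in> K"
    using assms(4) unfolding lspan_def by auto
  have "x = c b * b + (\<Sum>y\<in>B. c y * y)" using c(1) assms(2,3) by simp
  moreover have "(\<Sum>y\<in>B. c y * y) \<in> lspan K B" by (rule lspanI) (use c in auto)
  ultimately show ?thesis using c(2) by blast
qed

lemma lin_dep:
  fixes E :: "'a::field set"
  assumes E: "is_subfield E" and B: "finite B"
  shows "finite J \<Longrightarrow> card J > card B \<Longrightarrow> (\<forall>j\<in>J. v j \<in> lspan E B) \<Longrightarrow>
    \<exists>c. (\<forall>j\<in>J. c j \<in> E) \<and> (\<exists>j\<in>J. c j \<noteq> 0) \<and> (\<Sum>j\<in>J. c j * v j) = 0"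
  using B
proof (induction B arbitrary: J v rule: finite_induct)
  case empty
  then obtain j0 where j0: "j0 \<in> J" by fastforce
  have v0: "v j = 0" if "j \<in> J" for j using empty.prems(3) that lspan_empty[OF E] by auto
  show ?case
    by (rule exI[of _ "\<lambda>j. if j = j0 then 1 else 0"]) (use j0 v0 E in \<open>auto intro: subfieldD\<close>)
next
  case (insert b B)
  have "\<forall>j\<in>J. \<exists>e w. e \<in> E \<and> w \<in> lspan E B \<and> v j = e * b + w"
    using lspan_insert_decomp[OF E insert.hyps(1,2)] insert.prems(3) by blast
  then obtain e w where ew: "\<And>j. j \<in> J \<Longrightarrow> e j \<in> E \<and> w j \<in> lspan E B \<and> v j = e j * b + w j"
    by metis
  show ?case
  proof (cases "\<forall>j\<in>J. e j = 0")
    case True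
    have "card J > card B" using insert.prems(2) insert.hyps by simp
    moreover have "\<forall>j\<in>J. v j \<in> lspan E B" using ew True by auto
    ultimately show ?thesis using insert.IH[OF insert.prems(1)] by blast
  next
    case False
    then obtain k where k: "k \<in> J" "e k \<noteq> 0" by blast
    define J' where "J' = J - {k}"
    define v' where "v' j = v j - (e j / e k) * v k" for j
    have fJ': "finite J'" using insert.prems(1) J'_def by auto
    have cJ': "card J' > card B" using insert.prems(2) insert.hyps k(1) unfolding J'_def by simp
    have v'sp: "\<forall>j\<in>J'. v' j \<in> lspan E B"
    proof
      fix j assume j: "j \<in> J'"
      have "v' j = w j - (e j / e k) * w k"
        using ew[of j] ew[of k] j k unfolding v'_def J'_def by (simp add: field_simps)
      also have "\<dots> \<in> lspan E B"
        using ew[of j] ew[of k] j k unfolding J'_def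
        by (intro lspan_diff[OF E] lspan_smult[OF E] subfield_divide[OF E]) auto
      finally show "v' j \<in> lspan E B" .
    qed
    obtain c' where c': "\<forall>j\<in>J'. c' j \<in> E" "\<exists>j\<in>J'. c' j \<noteq> 0" "(\<Sum>j\<in>J'. c' j * v' j) = 0"
      using insert.IH[OF fJ' cJ' v'sp] by blast
    define s where "s = (\<Sum>j\<in>J'. c' j * (e j / e k))"
    define c where "c j = (if j = k then - s else c' j)" for j
    have sE: "s \<in> E" unfolding s_def using c' ew k
      by (intro subfield_sum[OF E] subfieldD(5)[OF E] subfield_divide[OF E]) (auto simp: J'_def)
    have "(\<Sum>j\<in>J. c j * v j) = c k * v k + (\<Sum>j\<in>J'. c j * v j)"
      using insert.prems(1) k unfolding J'_def by (simp add: sum.remove)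
    also have "(\<Sum>j\<in>J'. c j * v j) = (\<Sum>j\<in>J'. c' j * v j)"
      by (rule sum.cong) (auto simp: c_def J'_def)
    also have "\<dots> = (\<Sum>j\<in>J'. c' j * v' j) + s * v k"
      unfolding v'_def s_def by (simp add: algebra_simps sum.distrib sum_distrib_right sum_distrib_left sum_subtractf times_divide_eq_right)
    finally have "(\<Sum>j\<in>J. c j * v j) = 0" using c'(3) by (simp add: c_def)
    moreover have "\<forall>j\<in>J. c j \<in> E" using c' sE E by (auto simp: c_def J'_def intro: subfield_uminus)
    moreover have "\<exists>j\<in>J. c j \<noteq> 0" using c'(2) by (auto simp: c_def J'_def)
    ultimately show ?thesis by blast
  qed
qed

definition indep :: "'a::field set \<Rightarrow> 'a set \<Rightarrow> bool" where
  "indep K S \<longleftrightarrow> (\<forall>c. (\<forall>s\<in>S. c s \<in> K) \<and> (\<Sum>s\<in>S. c s * s) = 0 \<longrightarrow> (\<forall>s\<in>S. c s = 0))"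

lemma indep_card:
  assumes K: "is_subfield K" and B: "finite B" and S: "finite S" "indep K S" "S \<subseteq> lspan K B"
  shows "card S \<le> card B"
proof (rule ccontr)
  assume "\<not> card S \<le> card B"
  then have "card S > card B" by simp
  from lin_dep[OF K B S(1) this, of "\<lambda>s. s"] S(3)
  obtain c where "\<forall>j\<in>S. c j \<in> K" "\<exists>j\<in>S. c j \<noteq> 0" "(\<Sum>j\<in>S. c j * j) = 0" by blast
  with S(2) show False unfolding indep_def by blast
qed

lemma finite_degree_of_subset:
  assumes K: "is_subfield K" and B: "finite B" and M: "M \<subseteq> lspan K B"
  shows "finite_degree K M"
proof -
  define P where "P n \<longleftrightarrow> (\<exists>S. finite S \<and> S \<subseteq> M \<and> indep K S \<and> card S = n)" for n
  have P0: "P 0" unfolding P_def indep_def by (intro exI[of _ "{}"]) auto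
  have Pb: "\<forall>n. P n \<longrightarrow> n \<le> card B" unfolding P_def using indep_card[OF K B] M by blast
  obtain n where n: "P n" "\<forall>m. P m \<longrightarrow> m \<le> n" using Nat.ex_has_greatest_nat[of P 0 "card B"] P0 Pb by blast
  then obtain S where S: "finite S" "S \<subseteq> M" "indep K S" "card S = n" unfolding P_def by blast
  have "M \<subseteq> lspan K S"
  proof
    fix y assume y: "y \<in> M"
    show "y \<in> lspan K S"
    proof (rule ccontr)
      assume ny: "y \<notin> lspan K S"
      then have yS: "y \<notin> S" using lspan_gen[OF K S(1)] by blast
      have "indep K (insert y S)"
        unfolding indep_def
      proof (intro allI impI)
        fix c assume c: "(\<forall>s\<in>insert y S. c s \<in> K) \<and> (\<Sum>s\<in>insert y S. c s * s) = 0"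
        then have eq: "c y * y + (\<Sum>s\<in>S. c s * s) = 0" using S(1) yS by simp
        have cy: "c y = 0"
        proof (rule ccontr)
          assume cy: "c y \<noteq> 0"
          have "y = (\<Sum>s\<in>S. (- c s / c y) * s)"
            using eq cy by (simp add: sum_distrib_left[symmetric] field_simps sum_negf
                 flip: sum_divide_distrib) (metis add.commute add_eq_0_iff2 mult.commute)
          moreover have "(\<Sum>s\<in>S. (- c s / c y) * s) \<in> lspan K S"
            by (rule lspanI) (use c K in \<open>auto intro: subfield_divide subfield_uminus\<close>)
          ultimately show False using ny by simp
        qed
        then have "(\<Sum>s\<in>S. c s * s) = 0" using eq by simp
        then have "\<forall>s\<in>S. c s = 0" using S(3) c unfolding indep_def by blast
        then show "\<forall>s\<in>insert y S. c s = 0" using cy by simp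
      qed
      then have "P (Suc n)" unfolding P_def using S y yS by (intro exI[of _ "insert y S"]) auto
      then show False using n(2) by fastforce
    qed
  qed
  then show ?thesis unfolding finite_degree_lspan using S by blast
qed


lemma lspan_mult_right:
  assumes K: "is_subfield K" and x: "x \<in> lspan K B" and "\<And>b. b \<in> B \<Longrightarrow> b * p \<in> lspan K C"
  shows "x * p \<in> lspan K C"
proof -
  obtain c where c: "x = (\<Sum>b\<in>B. c b * b)" "\<forall>b\<in>B. c b \<in> K" using x unfolding lspan_def by auto
  have "x * p = (\<Sum>b\<in>B. c b * (b * p))" by (simp add: c sum_distrib_right mult.assoc)
  also have "\<dots> \<in> lspan K C" by (rule lspan_sum[OF K]) (use c assms in \<open>auto intro: lspan_smult\<close>)
  finally show ?thesis .
qed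

lemma lspan_mult:
  assumes K: "is_subfield K" and BB: "\<And>b b'. b \<in> B \<Longrightarrow> b' \<in> B \<Longrightarrow> b * b' \<in> lspan K B"
    and x: "x \<in> lspan K B" and y: "y \<in> lspan K B"
  shows "x * y \<in> lspan K B"
proof -
  have "b * y \<in> lspan K B" if b: "b \<in> B" for b
  proof -
    have "y * b \<in> lspan K B" by (rule lspan_mult_right[OF K y]) (use BB b in \<open>auto simp: mult.commute\<close>)
    then show ?thesis by (simp add: mult.commute)
  qed
  then show ?thesis by (rule lspan_mult_right[OF K x])
qed

lemma set_sum_closed:
  assumes "0 \<in> S" "\<And>u v. u \<in> S \<Longrightarrow> v \<in> S \<Longrightarrow> u + v \<in> S" "\<And>i. i \<in> I \<Longrightarrow> f i \<in> S"
  shows "sum f I \<in> S"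
  using assms(3) by (induction I rule: infinite_finite_induct) (use assms(1,2) in auto)

lemma poly_in_set:
  assumes "0 \<in> S" "1 \<in> S" "\<And>u v. u \<in> S \<Longrightarrow> v \<in> S \<Longrightarrow> u + v \<in> S"
    "\<And>u v. u \<in> S \<Longrightarrow> v \<in> S \<Longrightarrow> u * v \<in> S" "\<forall>i. coeff q i \<in> S" "(y::'a::comm_ring_1) \<in> S"
  shows "poly q y \<in> S"
proof -
  have pw: "y ^ n \<in> S" for n by (induction n) (use assms in auto)
  have "(\<Sum>i\<le>degree q. coeff q i * y ^ i) \<in> S"
    by (rule set_sum_closed) (use assms pw in auto)
  then show ?thesis by (simp add: poly_altdef)
qed

lemma inverse_in_set:
  assumes K: "is_subfield K" and KS: "K \<subseteq> S"
    and add: "\<And>u v. u \<in> S \<Longrightarrow> v \<in> S \<Longrightarrow> u + v \<in> S"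
    and mul: "\<And>u v. u \<in> S \<Longrightarrow> v \<in> S \<Longrightarrow> u * v \<in> S"
    and neg: "\<And>u. u \<in> S \<Longrightarrow> - u \<in> S"
    and y: "y \<in> S" and alg: "algebraic_over K y"
  shows "inverse y \<in> S"
proof (cases "y = 0")
  case True then show ?thesis using K KS subfieldD(1) by fastforce
next
  case ynz: False
  have S01: "0 \<in> S" "1 \<in> S" using K KS subfieldD(1,2) by auto
  have main: "\<And>q. degree q = n \<Longrightarrow> q \<noteq> 0 \<Longrightarrow> (\<forall>i. coeff q i \<in> K) \<Longrightarrow> poly q y = 0 \<Longrightarrow> inverse y \<in> S" for n
  proof (induction n rule: less_induct)
    case (less n q)
    obtain c q' where q: "q = pCons c q'" by (cases q) auto
    have cq': "\<forall>i. coeff q' i \<in> K" using less.prems(3) unfolding q by (metis coeff_pCons_Suc)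
    have cK: "c \<in> K" using less.prems(3)[rule_format, of 0] unfolding q by simp
    show ?case
    proof (cases "c = 0")
      case True
      have q'nz: "q' \<noteq> 0" using less.prems(2) q True by auto
      have "y * poly q' y = 0" using less.prems(4) q True by simp
      then have "poly q' y = 0" using ynz by simp
      moreover have "degree q' < n" using less.prems(1) q q'nz True by simp
      ultimately show ?thesis using less.IH q'nz cq' by blast
    next
      case False
      have "c + y * poly q' y = 0" using less.prems(4) q by simp
      then have "inverse y = (- poly q' y) * inverse c" using False ynz
        by (simp add: field_simps) (metis add.commute add_eq_0_iff2 mult.commute)
      moreover have "poly q' y \<in> S"
        by (rule poly_in_set) (use S01 add mul cq' KS y in auto)
      moreover have "inverse c \<in> S" using cK K KS subfieldD(6) by blast
      ultimately show ?thesis using mul neg by simp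
    qed
  qed
  from alg obtain q where "q \<noteq> 0" "\<forall>i. coeff q i \<in> K" "poly q y = 0" unfolding algebraic_over_def by blast
  then show ?thesis using main by blast
qed

lemma adjoin_one:
  fixes K :: "'a::field set"
  assumes K: "is_subfield K" and F: "is_subfield F" and KF: "K \<subseteq> F"
    and B: "finite B" and FB: "F \<subseteq> lspan K B" and alg: "\<forall>y. algebraic_over K y"
  shows "\<exists>B'. finite B' \<and> gen_field (F \<union> {a}) \<subseteq> lspan K B'"
proof -
  obtain q where q: "q \<noteq> 0" "\<forall>i. coeff q i \<in> K" "poly q a = 0"
    using alg unfolding algebraic_over_def by blast
  define D where "D = degree q"
  have Dpos: "D > 0"
  proof (rule ccontr)
    assume "\<not> D > 0"
    then have "degree q = 0" by (simp add: D_def)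
    then obtain c where "q = [:c:]" by (meson degree_eq_zeroE)
    then show False using q by simp
  qed
  define Pw where "Pw = (\<lambda>j. a ^ j) ` {..<D}"
  define S where "S = lspan F Pw"
  have fPw: "finite Pw" unfolding Pw_def by simp
  have lc: "lead_coeff q \<noteq> 0" using q(1) by simp
  have lcF: "coeff q i \<in> F" for i using q(2) KF by auto
  have pw: "a ^ m \<in> S" for m
  proof (induction m rule: less_induct)
    case (less m)
    show ?case
    proof (cases "m < D")
      case True then show ?thesis unfolding S_def Pw_def by (intro lspan_gen[OF F]) auto
    next
      case False
      have "0 = (\<Sum>i\<le>D. coeff q i * a ^ i)" using q(3) by (simp add: poly_altdef D_def)
      also have "\<dots> = (\<Sum>i<D. coeff q i * a ^ i) + lead_coeff q * a ^ D"
        by (simp add: D_def lessThan_Suc_atMost[symmetric])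
      finally have eq: "0 = (\<Sum>i<D. coeff q i * a ^ i) + lead_coeff q * a ^ D" .
      have e2: "lead_coeff q * a ^ D = - (\<Sum>i<D. coeff q i * a ^ i)"
        using eq by (simp add: eq_neg_iff_add_eq_0 add.commute)
      have "a ^ D = (lead_coeff q * a ^ D) / lead_coeff q" using lc by simp
      also have "\<dots> = (- (\<Sum>i<D. coeff q i * a ^ i)) / lead_coeff q"
        by (simp only: e2)
      also have "\<dots> = (\<Sum>i<D. (- coeff q i / lead_coeff q) * a ^ i)"
        unfolding sum_negf[symmetric] sum_divide_distrib by (rule sum.cong) auto
      finally have aD: "a ^ D = (\<Sum>i<D. (- coeff q i / lead_coeff q) * a ^ i)" .
      have "a ^ m = a ^ (m - D) * a ^ D" using False by (simp flip: power_add)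
      also have "\<dots> = (\<Sum>i<D. (- coeff q i / lead_coeff q) * a ^ (m - D + i))"
        unfolding aD by (simp add: sum_distrib_left power_add mult_ac)
      also have "\<dots> \<in> S" unfolding S_def
      proof (rule lspan_sum[OF F])
        fix i assume i: "i \<in> {..<D}"
        have "a ^ (m - D + i) \<in> S" using less.IH[of "m - D + i"] i False Dpos by auto
        then show "(- coeff q i / lead_coeff q) * a ^ (m - D + i) \<in> lspan F Pw"
          unfolding S_def using lcF F by (intro lspan_smult[OF F]) (auto intro: subfield_divide subfield_uminus)
      qed
      finally show ?thesis .
    qed
  qed
  have BB: "b * b' \<in> lspan F Pw" if bb: "b \<in> Pw" "b' \<in> Pw" for b b'
  proof -
    obtain j where "b = a ^ j" using bb(1) unfolding Pw_def by auto
    moreover obtain j' where "b' = a ^ j'" using bb(2) unfolding Pw_def by auto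
    ultimately
    show "b * b' \<in> lspan F Pw" using pw[of "j + j'"] unfolding S_def by (simp add: power_add)
  qed
  have Smul: "u * v \<in> S" if "u \<in> S" "v \<in> S" for u v
    using lspan_mult[OF F BB] that unfolding S_def by blast
  have S1: "1 \<in> S" using pw[of 0] by simp
  have FS: "F \<subseteq> S"
  proof
    fix f assume "f \<in> F"
    then have "f * 1 \<in> S" using S1 unfolding S_def by (intro lspan_smult[OF F])
    then show "f \<in> S" by simp
  qed
  have Ssub: "is_subfield S"
    unfolding is_subfield_def
  proof (intro conjI ballI)
    show "0 \<in> S" unfolding S_def by (rule lspan_zero[OF F])
    show "1 \<in> S" by (rule S1)
    fix x y assume x: "x \<in> S"
    { assume y: "y \<in> S"
      show "x + y \<in> S" "x - y \<in> S" "x * y \<in> S"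
        using x y Smul unfolding S_def by (auto intro: lspan_add[OF F] lspan_diff[OF F]) }
    show "inverse x \<in> S"
    proof (rule inverse_in_set[OF K _ _ Smul _ x])
      show "K \<subseteq> S" using KF FS by auto
      show "u + v \<in> S" if "u \<in> S" "v \<in> S" for u v using that unfolding S_def by (rule lspan_add[OF F])
      show "- u \<in> S" if "u \<in> S" for u
        using lspan_diff[OF F lspan_zero[OF F] that[unfolded S_def]] unfolding S_def by simp
      show "algebraic_over K x" using alg by blast
    qed
  qed
  have "gen_field (F \<union> {a}) \<subseteq> S"
    by (rule gen_field_least[OF Ssub]) (use FS pw[of 1] in auto)
  moreover have "S \<subseteq> lspan K ((\<lambda>(b, p). b * p) ` (B \<times> Pw))"
  proof
    fix x assume "x \<in> S"
    then obtain c where c: "x = (\<Sum>p\<in>Pw. c p * p)" "\<forall>p\<in>Pw. c p \<in> F" unfolding S_def lspan_def by auto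
    show "x \<in> lspan K ((\<lambda>(b, p). b * p) ` (B \<times> Pw))"
      unfolding c(1)
    proof (rule lspan_sum[OF K])
      fix p assume p: "p \<in> Pw"
      show "c p * p \<in> lspan K ((\<lambda>(b, p). b * p) ` (B \<times> Pw))"
      proof (rule lspan_mult_right[OF K])
        show "c p \<in> lspan K B" using c p FB by auto
        fix b assume "b \<in> B"
        then show "b * p \<in> lspan K ((\<lambda>(b, p). b * p) ` (B \<times> Pw))"
          using p B fPw by (intro lspan_gen[OF K]) auto
      qed
    qed
  qed
  moreover have "finite ((\<lambda>(b, p). b * p) ` (B \<times> Pw))" using B fPw by simp
  ultimately show ?thesis by (meson order_trans)
qed

lemma adjoin_finite:
  fixes K :: "'a::field set"
  assumes K: "is_subfield K" and alg: "\<forall>y. algebraic_over K y" and A: "finite A"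
  shows "\<exists>B. finite B \<and> gen_field (K \<union> A) \<subseteq> lspan K B"
  using A
proof (induction A rule: finite_induct)
  case empty
  have "gen_field K \<subseteq> K" by (rule gen_field_least[OF K]) auto
  moreover have "K \<subseteq> lspan K {1}"
  proof
    fix k assume "k \<in> K"
    then have "k * 1 \<in> lspan K {1}" by (intro lspan_smult[OF K] lspan_gen[OF K]) auto
    then show "k \<in> lspan K {1}" by simp
  qed
  ultimately show ?case by auto
next
  case (insert a A)
  define F where "F = gen_field (K \<union> A)"
  obtain B where B: "finite B" "F \<subseteq> lspan K B" using insert.IH F_def by blast
  have KF: "K \<subseteq> F" and AF: "A \<subseteq> F" using gen_field_sup[of "K \<union> A"] unfolding F_def by auto
  obtain B' where B': "finite B'" "gen_field (F \<union> {a}) \<subseteq> lspan K B'"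
    using adjoin_one[OF K gen_field_subfield[of "K \<union> A"] _ B(1) _ alg, folded F_def, OF KF B(2)] by blast
  have "gen_field (K \<union> insert a A) \<subseteq> gen_field (F \<union> {a})"
    by (rule gen_field_least[OF gen_field_subfield]) (use KF AF gen_field_sup[of "F \<union> {a}"] in auto)
  then show ?case using B' by blast
qed




definition lowb :: "int \<Rightarrow> 'a::comm_ring_1 fls \<Rightarrow> bool" where
  "lowb m f \<longleftrightarrow> (\<forall>k<m. f $$ k = 0)"

lemma lowb_0 [simp]: "lowb m 0" by (simp add: lowb_def)
lemma lowb_mono: "lowb m f \<Longrightarrow> m' \<le> m \<Longrightarrow> lowb m' f" by (simp add: lowb_def)
lemma lowb_add: "lowb m f \<Longrightarrow> lowb m g \<Longrightarrow> lowb m (f + g)" by (simp add: lowb_def)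
lemma lowb_diff: "lowb m f \<Longrightarrow> lowb m g \<Longrightarrow> lowb m (f - g)" by (simp add: lowb_def)
lemma lowb_uminus: "lowb m f \<Longrightarrow> lowb m (- f)" by (simp add: lowb_def)
lemma lowb_subdeg: "lowb (fls_subdegree f) f" by (simp add: lowb_def)
lemma lowb_one: "lowb 0 1" by (simp add: lowb_def)

lemma lowb_subdeg_ge: "lowb m f \<Longrightarrow> f \<noteq> 0 \<Longrightarrow> m \<le> fls_subdegree f"
  unfolding lowb_def by (rule fls_subdegree_geI) auto

lemma lowb_mult:
  assumes "lowb a f" "lowb b g" shows "lowb (a + b) (f * g)"
proof (cases "f = 0 \<or> g = 0")
  case True then show ?thesis by auto
next
  case False
  then have "a \<le> fls_subdegree f" "b \<le> fls_subdegree g" using assms lowb_subdeg_ge by auto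
  then show ?thesis unfolding lowb_def by (auto intro: fls_times_nth_eq0)
qed

lemma lowb_mult_nth:
  assumes f: "lowb a f" and g: "lowb b g" shows "(f * g) $$ (a + b) = f $$ a * g $$ b"
proof (cases "f = 0 \<or> g = 0")
  case True then show ?thesis by auto
next
  case False
  then have ge: "a \<le> fls_subdegree f" "b \<le> fls_subdegree g" using assms lowb_subdeg_ge by auto
  show ?thesis
  proof (cases "a = fls_subdegree f \<and> b = fls_subdegree g")
    case True
    have "(f * g) $$ (a + b) = (\<Sum>i=fls_subdegree f..(a+b) - fls_subdegree g. f $$ i * g $$ ((a+b) - i))"
      by (rule fls_times_nth(2))
    also have "\<dots> = f $$ a * g $$ b" using True by simp
    finally show ?thesis .
  next
    case False
    then have "a < fls_subdegree f \<or> b < fls_subdegree g" using ge by auto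
    then show ?thesis using ge by (auto intro!: fls_times_nth_eq0)
  qed
qed

lemma lowb_power: "lowb a f \<Longrightarrow> lowb (int n * a) (f ^ n)"
proof (induction n)
  case 0 then show ?case by (simp add: lowb_one)
next
  case (Suc n)
  have "lowb (a + int n * a) (f * f ^ n)" by (rule lowb_mult[OF Suc.prems Suc.IH[OF Suc.prems]])
  then show ?case by (simp add: algebra_simps)
qed

lemma lowb_sum: "(\<And>i. i \<in> I \<Longrightarrow> lowb m (f i)) \<Longrightarrow> lowb m (sum f I)"
  by (induction I rule: infinite_finite_induct) (auto intro: lowb_add)

lemma laurent_overI: "(\<And>i. f $$ i \<in> F) \<Longrightarrow> f \<in> laurent_over F"
  by (simp add: laurent_over_def)
lemma laurent_overD: "f \<in> laurent_over F \<Longrightarrow> f $$ i \<in> F"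
  by (simp add: laurent_over_def)

lemma laurent_over_mono: "K \<subseteq> F \<Longrightarrow> laurent_over K \<subseteq> laurent_over F"
  unfolding laurent_over_def by auto

lemma laurent_over_mult:
  assumes F: "is_subfield F" and "f \<in> laurent_over F" "g \<in> laurent_over F"
  shows "f * g \<in> laurent_over F"
proof (rule laurent_overI)
  fix n
  show "(f * g) $$ n \<in> F" unfolding fls_times_nth(2)
    by (rule subfield_sum[OF F]) (use assms in \<open>auto intro: subfieldD laurent_overD\<close>)
qed

lemma fps_ric_in:
  assumes F: "is_subfield F" and "\<And>i. f $ i \<in> F" "y \<in> F"
  shows "fps_right_inverse_constructor f y n \<in> F"
proof (induction n rule: less_induct)
  case (less n)
  show ?case
  proof (cases n)
    case 0 then show ?thesis using assms by simp
  next
    case (Suc m)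
    have "sum (\<lambda>i. f$i * fps_right_inverse_constructor f y (n - i)) {1..n} \<in> F"
      by (rule subfield_sum[OF F]) (use less assms in \<open>auto intro!: subfieldD(5)[OF F]\<close>)
    moreover have "fps_right_inverse_constructor f y n = - y * sum (\<lambda>i. f$i * fps_right_inverse_constructor f y (n - i)) {1..n}"
      unfolding Suc by (rule fps_right_inverse_constructor.simps(2))
    ultimately show ?thesis using assms by (metis subfieldD(5)[OF F] subfield_uminus[OF F])
  qed
qed

lemma laurent_over_inverse:
  assumes F: "is_subfield F" and f: "f \<in> laurent_over F"
  shows "inverse f \<in> laurent_over F"
proof (rule laurent_overI)
  fix n
  have y: "inverse (f $$ fls_subdegree f) \<in> F" using F f by (auto intro: subfieldD laurent_overD)
  have b: "fls_base_factor_to_fps f $ i \<in> F" for i using f by (simp add: fls_base_factor_to_fps_nth laurent_overD)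
  show "inverse f $$ n \<in> F"
    unfolding fls_inverse_def'
    using fps_ric_in[OF F b y] F by (simp add: subfieldD)
qed

lemma laurent_over_subfield:
  assumes F: "is_subfield F" shows "is_subfield (laurent_over F)"
  unfolding is_subfield_def
  using F laurent_over_mult[OF F] laurent_over_inverse[OF F]
  by (auto simp: laurent_over_def subfieldD)

lemma laurent_over_const: "c \<in> F \<Longrightarrow> is_subfield F \<Longrightarrow> fls_const c \<in> laurent_over F"
  by (auto simp: laurent_over_def subfieldD)

lemma laurent_over_shift: "f \<in> laurent_over F \<Longrightarrow> fls_shift m f \<in> laurent_over F"
  by (auto simp: laurent_over_def)

lemma laurent_over_poly:
  assumes F: "is_subfield F" and "\<forall>i. coeff q i \<in> laurent_over F" "y \<in> laurent_over F"
  shows "poly q y \<in> laurent_over F"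
  using laurent_over_subfield[OF F] assms(2,3)
  by (intro poly_in_set) (auto intro: subfieldD)

definition fmono :: "'a::comm_ring_1 \<Rightarrow> int \<Rightarrow> 'a fls" where
  "fmono c j = fls_shift (-j) (fls_const c)"

lemma mono_nth [simp]: "fmono c j $$ k = (if k = j then c else 0)"
  by (simp add: fmono_def)

definition trunc :: "'a::comm_ring_1 fls \<Rightarrow> int \<Rightarrow> 'a fls" where
  "trunc f N = (\<Sum>j\<in>{fls_subdegree f..<N}. fmono (f $$ j) j)"

lemma trunc_nth: "trunc f N $$ k = (if k < N then f $$ k else 0)"
proof -
  have "trunc f N $$ k = (\<Sum>j\<in>{fls_subdegree f..<N}. if k = j then f $$ j else 0)"
    by (simp add: trunc_def fls_nth_sum)
  also have "\<dots> = (if k \<in> {fls_subdegree f..<N} then f $$ k else 0)"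
    by (simp add: sum.delta)
  also have "\<dots> = (if k < N then f $$ k else 0)" by auto
  finally show ?thesis .
qed

lemma lowb_trunc_diff: "lowb N (f - trunc f N)"
  by (simp add: lowb_def trunc_nth)

lemma lowb_trunc: "lowb m f \<Longrightarrow> lowb m (trunc f N)"
  by (simp add: lowb_def trunc_nth)

lemma trunc_laurent_over: "(\<And>k. k < N \<Longrightarrow> f $$ k \<in> F) \<Longrightarrow> 0 \<in> F \<Longrightarrow> trunc f N \<in> laurent_over F"
  by (auto simp: laurent_over_def trunc_nth)




definition frq :: "nat \<Rightarrow> nat \<Rightarrow> nat" where
  "frq p n = (if p = 0 then 1 else p ^ n)"

lemma frq_pos: "frq p n > 0" by (simp add: frq_def)

lemma fresh_add:
  fixes x y :: "'b::idom"
  shows "(x + y) ^ frq CHAR('b) n = x ^ frq CHAR('b) n + y ^ frq CHAR('b) n"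
proof (cases "CHAR('b) = 0")
  case True then show ?thesis by (simp add: frq_def)
next
  case False
  then have "prime CHAR('b)" by (intro prime_CHAR_semidom) simp
  then show ?thesis using False by (simp add: frq_def freshmans_dream')
qed

lemma fresh_sum:
  fixes f :: "'c \<Rightarrow> 'b::idom"
  shows "(sum f A) ^ frq CHAR('b) n = (\<Sum>i\<in>A. f i ^ frq CHAR('b) n)"
proof (cases "CHAR('b) = 0")
  case True then show ?thesis by (simp add: frq_def)
next
  case False
  then have "prime CHAR('b)" by (intro prime_CHAR_semidom) simp
  then show ?thesis using False by (simp add: frq_def freshmans_dream_sum')
qed

lemma mono_power: "fmono c j ^ m = fmono (c ^ m) (int m * j)"
  by (simp add: fmono_def fls_shifted_pow fls_const_power)

lemma frob_nth:
  fixes \<sigma> :: "'a::field fls" and n :: nat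
  defines "q \<equiv> frq CHAR('a) n"
  shows "(\<sigma> ^ q) $$ k = (if int q dvd k then (\<sigma> $$ (k div int q)) ^ q else 0)"
proof -
  have qpos: "q > 0" unfolding q_def by (rule frq_pos)
  define N where "N = \<bar>k\<bar> + 1"
  define u where "u = trunc \<sigma> N"
  define h where "h = \<sigma> - u"
  have qq: "q = frq CHAR('a fls) n" by (simp add: q_def)
  have "\<sigma> ^ q = (u + h) ^ q" by (simp add: h_def)
  also have "\<dots> = u ^ q + h ^ q" unfolding qq by (rule fresh_add)
  finally have s1: "(\<sigma> ^ q) $$ k = (u ^ q) $$ k + (h ^ q) $$ k" by simp
  have "lowb (int q * N) (h ^ q)" unfolding h_def u_def by (intro lowb_power lowb_trunc_diff)
  moreover have "k < int q * N" using qpos unfolding N_def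
    by (smt (verit, ccfv_SIG) mult_le_cancel_right1 of_nat_0_less_iff)
  ultimately have "(h ^ q) $$ k = 0" unfolding lowb_def by blast
  moreover have "u ^ q = (\<Sum>j\<in>{fls_subdegree \<sigma>..<N}. fmono ((\<sigma> $$ j) ^ q) (int q * j))"
    unfolding u_def trunc_def qq fresh_sum by (simp add: mono_power)
  then have "(u ^ q) $$ k = (\<Sum>j\<in>{fls_subdegree \<sigma>..<N}. if k = int q * j then (\<sigma> $$ j) ^ q else 0)"
    by (simp add: fls_nth_sum)
  ultimately have s2: "(\<sigma> ^ q) $$ k = (\<Sum>j\<in>{fls_subdegree \<sigma>..<N}. if k = int q * j then (\<sigma> $$ j) ^ q else 0)"
    using s1 by simp
  show ?thesis
  proof (cases "int q dvd k")
    case True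
    then obtain i where i: "k = int q * i" by blast
    have iq: "k div int q = i" using i qpos by simp
    have "(\<Sum>j\<in>{fls_subdegree \<sigma>..<N}. if k = int q * j then (\<sigma> $$ j) ^ q else 0)
        = (\<Sum>j\<in>{fls_subdegree \<sigma>..<N}. if i = j then (\<sigma> $$ j) ^ q else 0)"
      by (rule sum.cong) (use i qpos in auto)
    also have "\<dots> = (if i \<in> {fls_subdegree \<sigma>..<N} then (\<sigma> $$ i) ^ q else 0)"
      by (simp add: sum.delta)
    also have "\<dots> = (\<sigma> $$ i) ^ q"
    proof -
      have "i < N" unfolding N_def using i qpos
        by (smt (verit) mult_le_cancel_right1 mult_minus_right of_nat_0_less_iff)
      moreover have "i < fls_subdegree \<sigma> \<Longrightarrow> (\<sigma> $$ i) ^ q = 0" using qpos by simp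
      ultimately show ?thesis by auto
    qed
    finally show ?thesis using s2 True iq by simp
  next
    case False
    have "(\<Sum>j\<in>{fls_subdegree \<sigma>..<N}. if k = int q * j then (\<sigma> $$ j) ^ q else 0) = 0"
      by (rule sum.neutral) (use False in auto)
    then show ?thesis using s2 False by simp
  qed
qed




definition Dx :: "'a::comm_ring_1 poly \<Rightarrow> 'a \<Rightarrow> 'a \<Rightarrow> 'a" where
  "Dx P y z = (\<Sum>j\<le>degree P. coeff P j * (\<Sum>l<j. z ^ (j - Suc l) * y ^ l))"

lemma poly_altdef_le: "degree p \<le> n \<Longrightarrow> poly p x = (\<Sum>i\<le>n. coeff p i * x ^ i)"
  for p :: "'a::comm_ring_1 poly"
proof -
  assume "degree p \<le> n"
  then have "poly p x = poly (\<Sum>i\<le>n. monom (coeff p i) i) x" by (simp add: poly_as_sum_of_monoms')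
  also have "\<dots> = (\<Sum>i\<le>n. coeff p i * x ^ i)" by (simp add: poly_sum poly_monom)
  finally show ?thesis .
qed

lemma Dx_diff: "poly P y - poly P z = (y - z) * Dx P y z"
proof -
  have "poly P y - poly P z = (\<Sum>j\<le>degree P. coeff P j * (y ^ j - z ^ j))"
    by (simp add: poly_altdef sum_subtractf right_diff_distrib)
  also have "\<dots> = (\<Sum>j\<le>degree P. coeff P j * ((y - z) * (\<Sum>l<j. z ^ (j - Suc l) * y ^ l)))"
    by (simp add: power_diff_sumr2)
  also have "\<dots> = (y - z) * Dx P y z"
    by (simp add: Dx_def sum_distrib_left mult_ac)
  finally show ?thesis .
qed

lemma Dx_same: "Dx P y y = poly (pderiv P) y"
proof -
  define d where "d = degree P"
  define f where "f j = coeff P j * (of_nat j * y ^ (j - 1))" for j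
  have "Dx P y y = (\<Sum>j\<le>d. f j)"
  proof -
    have "(\<Sum>l<j. y ^ (j - Suc l) * y ^ l) = of_nat j * y ^ (j - 1)" for j
    proof -
      have "(\<Sum>l<j. y ^ (j - Suc l) * y ^ l) = (\<Sum>l<j. y ^ (j - 1))"
        by (rule sum.cong) (auto simp flip: power_add)
      then show ?thesis by simp
    qed
    then show ?thesis by (simp add: Dx_def d_def f_def)
  qed
  also have "\<dots> = (\<Sum>j\<le>Suc d. f j)" by (simp add: f_def d_def coeff_eq_0)
  also have "\<dots> = f 0 + (\<Sum>i\<le>d. f (Suc i))" by (rule sum.atMost_Suc_shift)
  also have "\<dots> = (\<Sum>i\<le>d. coeff (pderiv P) i * y ^ i)" by (simp add: f_def coeff_pderiv mult_ac)
  also have "\<dots> = poly (pderiv P) y"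
  proof -
    have "degree (pderiv P) \<le> d" by (rule degree_le) (simp add: coeff_pderiv d_def coeff_eq_0)
    then show ?thesis by (simp add: poly_altdef_le)
  qed
  finally show ?thesis .
qed

lemma lowb_pow_diff:
  assumes B: "B \<le> 0" and y: "lowb B y" and y': "lowb B y'" and m: "lowb m (y - y')"
  shows "lowb (m + int k * B) (y ^ k - y' ^ k)"
proof -
  have "y ^ k - y' ^ k = (y - y') * (\<Sum>i<k. y' ^ (k - Suc i) * y ^ i)" by (rule power_diff_sumr2)
  moreover have "lowb (int k * B) (\<Sum>i<k. y' ^ (k - Suc i) * y ^ i)"
  proof (rule lowb_sum)
    fix i assume i: "i \<in> {..<k}"
    have "lowb (int (k - Suc i) * B + int i * B) (y' ^ (k - Suc i) * y ^ i)"
      by (intro lowb_mult lowb_power y y')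
    moreover have "int k * B \<le> int (k - Suc i) * B + int i * B"
      using i B by (simp add: of_nat_diff flip: distrib_right) (simp add: mult_right_mono_neg)
    ultimately show "lowb (int k * B) (y' ^ (k - Suc i) * y ^ i)" by (rule lowb_mono)
  qed
  ultimately show ?thesis using lowb_mult[OF m] by simp
qed

lemma lowb_exists: "finite I \<Longrightarrow> \<exists>A. \<forall>j\<in>I. lowb A (f j)"
proof (induction I rule: finite_induct)
  case empty then show ?case by simp
next
  case (insert x I)
  then obtain A where "\<forall>j\<in>I. lowb A (f j)" by blast
  then show ?case using lowb_subdeg[of "f x"]
    by (intro exI[of _ "min A (fls_subdegree (f x))"]) (auto intro: lowb_mono)
qed

lemma Dx_lowb_diff:
  fixes P :: "'a::field fls poly"
  assumes B: "B \<le> 0" and A: "\<forall>j. lowb A (coeff P j)"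
    and yb: "lowb B y" "lowb B y'" "lowb B z" "lowb B z'"
    and m: "lowb m (y - y')" "lowb m (z - z')"
  shows "lowb (m + A + int (degree P) * B) (Dx P y z - Dx P y' z')"
proof -
  define d where "d = degree P"
  have "Dx P y z - Dx P y' z' =
      (\<Sum>j\<le>d. coeff P j * (\<Sum>l<j. z ^ (j - Suc l) * y ^ l - z' ^ (j - Suc l) * y' ^ l))"
    by (simp add: Dx_def d_def sum_subtractf right_diff_distrib)
  also have "lowb (m + A + int d * B) \<dots>"
  proof (rule lowb_sum)
    fix j assume j: "j \<in> {..d}"
    have inner: "lowb (m + int d * B) (z ^ (j - Suc l) * y ^ l - z' ^ (j - Suc l) * y' ^ l)" if l: "l \<in> {..<j}" for l
    proof -
      define a where "a = j - Suc l"
      have ab: "int a + int l \<le> int d" using j l by (auto simp: a_def)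
      have e: "z ^ a * y ^ l - z' ^ a * y' ^ l = (z ^ a - z' ^ a) * y ^ l + z' ^ a * (y ^ l - y' ^ l)"
        by (simp add: algebra_simps)
      have "lowb (m + int a * B + int l * B) ((z ^ a - z' ^ a) * y ^ l)"
        by (intro lowb_mult lowb_pow_diff lowb_power B yb m)
      moreover have "lowb (int a * B + (m + int l * B)) (z' ^ a * (y ^ l - y' ^ l))"
        by (intro lowb_mult lowb_pow_diff lowb_power B yb m)
      ultimately have "lowb (m + int a * B + int l * B) (z ^ a * y ^ l - z' ^ a * y' ^ l)"
        unfolding e by (intro lowb_add) (auto simp: algebra_simps)
      moreover have "m + int d * B \<le> m + int a * B + int l * B"
        using ab B by (simp flip: distrib_right add.assoc) (simp add: mult_right_mono_neg)
      ultimately show ?thesis unfolding a_def by (rule lowb_mono)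
    qed
    have "lowb (A + (m + int d * B)) (coeff P j * (\<Sum>l<j. z ^ (j - Suc l) * y ^ l - z' ^ (j - Suc l) * y' ^ l))"
      by (intro lowb_mult A[rule_format] lowb_sum inner)
    then show "lowb (m + A + int d * B) (coeff P j * (\<Sum>l<j. z ^ (j - Suc l) * y ^ l - z' ^ (j - Suc l) * y' ^ l))"
      by (simp add: algebra_simps)
  qed
  finally show ?thesis by (simp add: d_def)
qed




lemma Dx_in:
  assumes S: "is_subfield S" and "\<forall>j. coeff P j \<in> S" "y \<in> S" "z \<in> S"
  shows "Dx P y z \<in> S"
  unfolding Dx_def using assms
  by (intro subfield_sum[OF S] subfieldD(5)[OF S] subfield_power[OF S]) auto

lemma hensel_coeffs:
  fixes P :: "'a::field fls poly" and \<tau> :: "'a fls" and K :: "'a set"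
  assumes K: "is_subfield K" and cP: "\<forall>j. coeff P j \<in> laurent_over K"
    and root: "poly P \<tau> = 0" and sep: "poly (pderiv P) \<tau> \<noteq> 0"
  shows "\<exists>N. \<forall>i. \<tau> $$ i \<in> gen_field (K \<union> (\<lambda>j. \<tau> $$ j) ` {fls_subdegree \<tau>..<N})"
proof -
  define d where "d = degree P"
  obtain A where A0: "\<forall>j\<in>{..d}. lowb A (coeff P j)" using lowb_exists[OF finite_atMost[of d], of "coeff P"] by (elim exE)
  have A: "\<forall>j. lowb A (coeff P j)"
  proof
    fix j show "lowb A (coeff P j)"
      using A0 by (cases "j \<le> d") (auto simp: d_def coeff_eq_0)
  qed
  define s where "s = fls_subdegree \<tau>"
  define B where "B = min s 0"
  have B0: "B \<le> 0" by (simp add: B_def)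
  have Bt: "lowb B \<tau>" using lowb_subdeg[of \<tau>] by (rule lowb_mono) (simp add: B_def s_def)
  define C where "C = A + int d * B"
  define G0 where "G0 = Dx P \<tau> \<tau>"
  have G0nz: "G0 \<noteq> 0" using sep by (simp add: G0_def Dx_same)
  define e where "e = fls_subdegree G0"
  define lam where "lam = G0 $$ e"
  have lamnz: "lam \<noteq> 0" using G0nz by (simp add: lam_def e_def)
  have G0e: "lowb e G0" unfolding e_def by (rule lowb_subdeg)
  define N0 where "N0 = e - C + 1"
  define \<Omega> where "\<Omega> = gen_field (K \<union> (\<lambda>j. \<tau> $$ j) ` {s..<N0})"
  have Om: "is_subfield \<Omega>" unfolding \<Omega>_def by (rule gen_field_subfield)
  have supO: "K \<union> (\<lambda>j. \<tau> $$ j) ` {s..<N0} \<subseteq> \<Omega>" unfolding \<Omega>_def by (rule gen_field_sup)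
  then have KOm: "K \<subseteq> \<Omega>" by (rule subset_trans[rotated]) simp
  have LO: "is_subfield (laurent_over \<Omega>)" by (rule laurent_over_subfield[OF Om])
  have cPO: "\<forall>j. coeff P j \<in> laurent_over \<Omega>" using cP laurent_over_mono[OF KOm] by blast
  have low: "\<tau> $$ k \<in> \<Omega>" if "k < N0" for k
  proof (cases "k < s")
    case True then show ?thesis using subfieldD(1)[OF Om] by (simp add: s_def)
  next
    case False
    then have "\<tau> $$ k \<in> (\<lambda>j. \<tau> $$ j) ` {s..<N0}" using that by auto
    then show ?thesis using supO by (meson UnI2 subsetD)
  qed
  have Dtr: "lowb (N + C) (Dx P (trunc \<tau> N) \<tau> - Dx P \<tau> \<tau>)"
     "lowb (N + C) (Dx P (trunc \<tau> N) (trunc \<tau> N) - Dx P \<tau> \<tau>)" for N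
  proof -
    have t1: "lowb N (trunc \<tau> N - \<tau>)" using lowb_uminus[OF lowb_trunc_diff[of N \<tau>]] by simp
    have t2: "lowb B (trunc \<tau> N)" by (rule lowb_trunc[OF Bt])
    have t0: "lowb N (\<tau> - \<tau>)" by simp
    show "lowb (N + C) (Dx P (trunc \<tau> N) \<tau> - Dx P \<tau> \<tau>)"
      using Dx_lowb_diff[OF B0 A t2 Bt Bt Bt t1 t0] by (simp add: C_def d_def add.assoc)
    show "lowb (N + C) (Dx P (trunc \<tau> N) (trunc \<tau> N) - Dx P \<tau> \<tau>)"
      using Dx_lowb_diff[OF B0 A t2 Bt t2 Bt t1 t1] by (simp add: C_def d_def add.assoc)
  qed
  have nthG: "(Dx P (trunc \<tau> N) z) $$ e = lam \<and> lowb e (Dx P (trunc \<tau> N) z)"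
    if N: "N \<ge> N0" and z: "Dx P (trunc \<tau> N) z - G0 = H" "lowb (N + C) H" for N z H
  proof -
    have "lowb (e + 1) H" by (rule lowb_mono[OF z(2)]) (use N in \<open>simp add: N0_def\<close>)
    then have H: "lowb e H" "H $$ e = 0" by (auto simp: lowb_def intro: lowb_mono)
    have eq: "Dx P (trunc \<tau> N) z = G0 + H" using z(1) by (simp add: algebra_simps)
    show ?thesis unfolding eq using H G0e by (auto simp: lam_def intro: lowb_add)
  qed
  have lamO: "lam \<in> \<Omega>"
  proof -
    define u0 where "u0 = trunc \<tau> N0"
    have u0O: "u0 \<in> laurent_over \<Omega>" unfolding u0_def
      by (rule trunc_laurent_over) (use low subfieldD(1)[OF Om] in auto)
    have "Dx P u0 u0 \<in> laurent_over \<Omega>" by (rule Dx_in[OF LO cPO u0O u0O])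
    moreover have "(Dx P u0 u0) $$ e = lam"
      using nthG[OF order_refl refl Dtr(2)[of N0, folded G0_def]] unfolding u0_def G0_def by blast
    ultimately show ?thesis by (metis laurent_overD)
  qed
  have step: "\<forall>k < N0 + int m. \<tau> $$ k \<in> \<Omega>" for m
  proof (induction m)
    case 0 then show ?case using low by simp
  next
    case (Suc m)
    define i where "i = N0 + int m"
    have below: "\<tau> $$ k \<in> \<Omega>" if "k < i" for k using Suc.IH that by (simp add: i_def)
    define u where "u = trunc \<tau> i"
    define h where "h = \<tau> - u"
    have uO: "u \<in> laurent_over \<Omega>" unfolding u_def
      by (rule trunc_laurent_over) (use below subfieldD(1)[OF Om] in auto)
    have hl: "lowb i h" unfolding h_def u_def by (rule lowb_trunc_diff)
    have hi: "h $$ i = \<tau> $$ i" by (simp add: h_def u_def trunc_nth)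
    have PuO: "poly P u \<in> laurent_over \<Omega>" by (rule laurent_over_poly[OF Om cPO uO])
    have "poly P u = poly P u - poly P \<tau>" using root by simp
    also have "\<dots> = (u - \<tau>) * Dx P u \<tau>" by (rule Dx_diff)
    finally have Pu: "poly P u = - (h * Dx P u \<tau>)" by (simp add: h_def algebra_simps)
    have iN: "i \<ge> N0" by (simp add: i_def)
    have G: "(Dx P u \<tau>) $$ e = lam" "lowb e (Dx P u \<tau>)"
      using nthG[OF iN refl Dtr(1)[of i, folded G0_def]] unfolding u_def G0_def by auto
    have "(poly P u) $$ (i + e) = - (\<tau> $$ i * lam)"
      unfolding Pu using lowb_mult_nth[OF hl G(2)] G(1) hi by simp
    then have "\<tau> $$ i = - ((poly P u) $$ (i + e)) / lam" using lamnz by (simp add: field_simps)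
    moreover have "(poly P u) $$ (i + e) \<in> \<Omega>" using PuO by (rule laurent_overD)
    ultimately have "\<tau> $$ i \<in> \<Omega>" using lamO Om by (simp add: subfield_divide subfield_uminus)
    then show ?case using below unfolding i_def
      by (metis add_less_cancel_left int_Suc le_less not_less of_nat_Suc zless_add1_eq add.assoc)
  qed
  have "\<forall>i. \<tau> $$ i \<in> \<Omega>"
  proof
    fix i
    show "\<tau> $$ i \<in> \<Omega>" using step[of "nat (i - N0 + 1)"] by (cases "i < N0") (auto simp: low)
  qed
  then show ?thesis unfolding \<Omega>_def s_def by blast
qed




lemma frq_Suc: "p > 0 \<Longrightarrow> frq p (Suc n) = frq p n * p"
  by (simp add: frq_def)

lemma pderiv_coeffs_in:
  assumes E: "is_subfield E" and "\<forall>j. coeff P j \<in> E"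
  shows "\<forall>j. coeff (pderiv P) j \<in> E"
proof
  fix j
  have "of_nat (Suc j) * coeff P (Suc j) \<in> E"
    by (rule subfieldD(5)[OF E subfield_of_nat[OF E]]) (use assms(2) in blast)
  then show "coeff (pderiv P) j \<in> E" by (simp only: coeff_pderiv)
qed

lemma degree_pderiv_less:
  assumes "degree P > 0" shows "degree (pderiv P) < degree P"
proof -
  have "degree (pderiv P) \<le> degree P - 1"
    by (rule degree_le) (auto simp: coeff_pderiv coeff_eq_0)
  then show ?thesis using assms by simp
qed

lemma root_degree_pos:
  assumes "P \<noteq> 0" "poly P x = 0" shows "degree P > 0"
proof (rule ccontr)
  assume "\<not> degree P > 0"
  then obtain c where "P = [:c:]" by (metis degree_eq_zeroE neq0_conv)
  then show False using assms by simp
qed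

lemma char_p_squeeze:
  fixes P :: "'b::field poly"
  assumes p: "CHAR('b) > 0" and pd: "pderiv P = 0" and E: "is_subfield E"
    and cP: "\<forall>j. coeff P j \<in> E" and nz: "P \<noteq> 0" and root: "poly P x = 0"
  shows "\<exists>Q. Q \<noteq> 0 \<and> (\<forall>j. coeff Q j \<in> E) \<and> poly Q (x ^ CHAR('b)) = 0 \<and> degree Q < degree P"
proof -
  define c where "c = CHAR('b)"
  have c2: "c \<ge> 2" using p prime_CHAR_semidom[of] unfolding c_def
    by (metis One_nat_def Suc_1 Suc_leI CHAR_not_1' le_neq_implies_less)
  define d where "d = degree P"
  have dpos: "d > 0" using root_degree_pos[OF nz root] by (simp add: d_def)
  have dv: "c dvd j" if "coeff P j \<noteq> 0" for j
  proof (cases j)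
    case 0 then show ?thesis by simp
  next
    case (Suc i)
    have "of_nat (Suc i) * coeff P (Suc i) = 0" using pd by (metis coeff_0 coeff_pderiv)
    then have "of_nat j = (0::'b)" using that Suc by simp
    then show ?thesis unfolding c_def by (simp add: of_nat_eq_0_iff_char_dvd)
  qed
  define M where "M = d div c"
  define Q where "Q = (\<Sum>i\<le>M. monom (coeff P (c * i)) i)"
  have cQ: "coeff Q i = (if i \<le> M then coeff P (c * i) else 0)" for i
    by (simp add: Q_def coeff_sum coeff_monom)
  have "c dvd d" using dv[of d] nz by (simp add: d_def)
  then have cM: "c * M = d" by (simp add: M_def)
  have Qnz: "Q \<noteq> 0"
  proof
    assume "Q = 0"
    then have "coeff Q M = 0" by simp
    then show False using cQ[of M] cM nz by (simp add: d_def)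
  qed
  have "degree Q \<le> M" by (rule degree_le) (simp add: cQ)
  moreover have "M < d" using cM c2 dpos by (metis Suc_1 Suc_le_eq div_less_dividend M_def le_numeral_extra(4) less_le_trans nat_less_le one_less_numeral_iff semiring_norm(76))
  ultimately have dQ: "degree Q < degree P" by (simp add: d_def)
  have "poly Q (x ^ c) = (\<Sum>i\<le>M. coeff P (c * i) * x ^ (c * i))"
    by (simp add: Q_def poly_sum poly_monom power_mult)
  also have "\<dots> = (\<Sum>j\<in>(\<lambda>i. c * i) ` {..M}. coeff P j * x ^ j)"
    using c2 by (subst sum.reindex) (auto simp: inj_on_def)
  also have "\<dots> = (\<Sum>j\<le>d. coeff P j * x ^ j)"
  proof (rule sum.mono_neutral_left)
    show "(\<lambda>i. c * i) ` {..M} \<subseteq> {..d}" using cM c2 by auto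
    show "\<forall>j\<in>{..d} - (\<lambda>i. c * i) ` {..M}. coeff P j * x ^ j = 0"
    proof
      fix j assume j: "j \<in> {..d} - (\<lambda>i. c * i) ` {..M}"
      show "coeff P j * x ^ j = 0"
      proof (rule ccontr)
        assume "coeff P j * x ^ j \<noteq> 0"
        then have "c dvd j" using dv by auto
        then obtain i where "j = c * i" by blast
        moreover have "i \<le> M" using j c2 \<open>j = c * i\<close> cM by auto
        ultimately show False using j by auto
      qed
    qed
  qed simp
  also have "\<dots> = poly P x" by (simp add: poly_altdef d_def)
  finally have "poly Q (x ^ c) = 0" using root by simp
  moreover have "\<forall>j. coeff Q j \<in> E" using cP E by (simp add: cQ subfieldD(1))
  ultimately show ?thesis using Qnz dQ unfolding c_def by blast
qed

lemma sep_reduction: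
  fixes \<sigma> :: "'a::field fls" and E :: "'a fls set"
  assumes E: "is_subfield E" and alg: "algebraic_over E \<sigma>"
  shows "\<exists>n P. P \<noteq> 0 \<and> (\<forall>j. coeff P j \<in> E) \<and> poly P (\<sigma> ^ frq CHAR('a) n) = 0
           \<and> poly (pderiv P) (\<sigma> ^ frq CHAR('a) n) \<noteq> 0"
proof -
  define Q where "Q k \<longleftrightarrow> (\<exists>n P. P \<noteq> 0 \<and> (\<forall>j. coeff P j \<in> E) \<and> poly P (\<sigma> ^ frq CHAR('a) n) = 0 \<and> degree P = k)" for k
  obtain P0 where P0: "P0 \<noteq> 0" "\<forall>j. coeff P0 j \<in> E" "poly P0 \<sigma> = 0" using alg unfolding algebraic_over_def by blast
  have "Q (degree P0)" unfolding Q_def using P0 by (intro exI[of _ 0] exI[of _ P0]) (simp add: frq_def)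
  then obtain k where k: "Q k" "\<And>k'. Q k' \<Longrightarrow> k \<le> k'" by (metis LeastI Least_le)
  then obtain n P where P: "P \<noteq> 0" "\<forall>j. coeff P j \<in> E" "poly P (\<sigma> ^ frq CHAR('a) n) = 0" "degree P = k"
    unfolding Q_def by blast
  define x where "x = \<sigma> ^ frq CHAR('a) n"
  have dpos: "degree P > 0" using root_degree_pos[OF P(1) P(3)] .
  have "poly (pderiv P) x \<noteq> 0"
  proof
    assume z: "poly (pderiv P) x = 0"
    show False
    proof (cases "pderiv P = 0")
      case False
      have "Q (degree (pderiv P))" unfolding Q_def using False z pderiv_coeffs_in[OF E P(2)]
        by (intro exI[of _ n] exI[of _ "pderiv P"]) (simp add: x_def)
      then show False using k(2) degree_pderiv_less[OF dpos] P(4) by fastforce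
    next
      case True
      show False
      proof (cases "CHAR('a) = 0")
        case c0: True
        have "CHAR('a fls) = 0" using c0 by simp
        then have "of_nat (degree P) \<noteq> (0::'a fls)" using dpos unfolding CHAR_eq0_iff by blast
        moreover have "of_nat (Suc (degree P - 1)) * coeff P (Suc (degree P - 1)) = 0"
          using True by (metis coeff_0 coeff_pderiv)
        ultimately show False using dpos P(1) by simp
      next
        case cp: False
        then have cpos: "CHAR('a fls) > 0" by simp
        obtain R where R: "R \<noteq> 0" "\<forall>j. coeff R j \<in> E" "poly R (x ^ CHAR('a fls)) = 0" "degree R < degree P"
          using char_p_squeeze[OF cpos True E P(2) P(1)] P(3) unfolding x_def by blast
        have "x ^ CHAR('a fls) = \<sigma> ^ frq CHAR('a) (Suc n)"
          using cp by (simp add: x_def frq_Suc power_mult)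
        then have "Q (degree R)" unfolding Q_def using R by (intro exI[of _ "Suc n"] exI[of _ R]) simp
        then show False using k(2) R(4) P(4) by fastforce
      qed
    qed
  qed
  then show ?thesis using P unfolding x_def by blast
qed




lemma frob_image:
  fixes L :: "'a::field set"
  shows "frob_pow_set n L = (\<lambda>f. f ^ frq CHAR('a) n) ` L"
  by (simp add: frob_pow_set_def frq_def)

lemma frob_subfield_preimage:
  fixes \<Omega> :: "'a::field set"
  assumes Om: "is_subfield \<Omega>"
  shows "is_subfield {y. y ^ frq CHAR('a) n \<in> \<Omega>}"
proof -
  define q where "q = frq CHAR('a) n"
  have qpos: "q > 0" unfolding q_def by (rule frq_pos)
  have add: "(x + y) ^ q = x ^ q + y ^ q" for x y :: 'a unfolding q_def by (rule fresh_add)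
  have sub: "(x - y) ^ q = x ^ q - y ^ q" for x y :: 'a
    using add[of "x - y" y] by (simp add: algebra_simps)
  show ?thesis
    unfolding is_subfield_def q_def[symmetric]
    using Om qpos
    by (auto simp: add sub power_mult_distrib power_inverse power_0_left intro: subfieldD)
qed

lemma necessity:
  fixes K :: "'a::field set" and \<sigma> :: "'a fls"
  assumes K: "is_subfield K" and algK: "\<forall>a. algebraic_over K a"
    and alg: "algebraic_over (laurent_over K) \<sigma>"
  shows "\<exists>n::nat. finite_degree K
       (gen_field (K \<union> frob_pow_set n (gen_field (K \<union> range (fls_nth \<sigma>)))))"
proof -
  have E: "is_subfield (laurent_over K)" by (rule laurent_over_subfield[OF K])
  obtain n P where P: "P \<noteq> 0" "\<forall>j. coeff P j \<in> laurent_over K" "poly P (\<sigma> ^ frq CHAR('a) n) = 0"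
      "poly (pderiv P) (\<sigma> ^ frq CHAR('a) n) \<noteq> 0"
    using sep_reduction[OF E alg] by blast
  define q where "q = frq CHAR('a) n"
  have qpos: "q > 0" unfolding q_def by (rule frq_pos)
  define \<tau> where "\<tau> = \<sigma> ^ q"
  obtain N where N: "\<forall>i. \<tau> $$ i \<in> gen_field (K \<union> (\<lambda>j. \<tau> $$ j) ` {fls_subdegree \<tau>..<N})"
    using hensel_coeffs[OF K P(2) P(3) P(4)] unfolding \<tau>_def q_def by blast
  define \<Omega> where "\<Omega> = gen_field (K \<union> (\<lambda>j. \<tau> $$ j) ` {fls_subdegree \<tau>..<N})"
  have Om: "is_subfield \<Omega>" unfolding \<Omega>_def by (rule gen_field_subfield)
  have KOm: "K \<subseteq> \<Omega>" using gen_field_sup[of "K \<union> (\<lambda>j. \<tau> $$ j) ` {fls_subdegree \<tau>..<N}"]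
    unfolding \<Omega>_def by (meson le_supE)
  obtain B where B: "finite B" "\<Omega> \<subseteq> lspan K B"
    using adjoin_finite[OF K algK, of "(\<lambda>j. \<tau> $$ j) ` {fls_subdegree \<tau>..<N}"] unfolding \<Omega>_def by blast
  define T where "T = {y. y ^ q \<in> \<Omega>}"
  have T: "is_subfield T" unfolding T_def q_def by (rule frob_subfield_preimage[OF Om])
  have KT: "K \<subseteq> T" unfolding T_def using KOm subfield_power[OF K] by blast
  have sT: "range (fls_nth \<sigma>) \<subseteq> T"
  proof
    fix y assume "y \<in> range (fls_nth \<sigma>)"
    then obtain i where i: "y = \<sigma> $$ i" by blast
    have "\<tau> $$ (int q * i) = (\<sigma> $$ i) ^ q"
      unfolding \<tau>_def q_def using frob_nth[of \<sigma> n "int (frq CHAR('a) n) * i"] frq_pos[of "CHAR('a)" n] by simp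
    then show "y \<in> T" using N i unfolding T_def \<Omega>_def by (metis mem_Collect_eq)
  qed
  have "gen_field (K \<union> range (fls_nth \<sigma>)) \<subseteq> T" by (rule gen_field_least[OF T]) (use KT sT in blast)
  then have "frob_pow_set n (gen_field (K \<union> range (fls_nth \<sigma>))) \<subseteq> \<Omega>"
    unfolding frob_image q_def[symmetric] T_def by blast
  then have "gen_field (K \<union> frob_pow_set n (gen_field (K \<union> range (fls_nth \<sigma>)))) \<subseteq> \<Omega>"
    using KOm by (intro gen_field_least[OF Om]) blast
  then have "finite_degree K (gen_field (K \<union> frob_pow_set n (gen_field (K \<union> range (fls_nth \<sigma>)))))"
    using B by (intro finite_degree_of_subset[OF K B(1)]) blast
  then show ?thesis by blast
qed




lemma fls_const_add': "fls_const (a + b) = fls_const a + (fls_const b :: 'a::comm_ring_1 fls)"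
  by (simp add: fls_eq_iff)

lemma fls_const_sum': "fls_const (sum f A) = (\<Sum>a\<in>A. fls_const (f a) :: 'a::comm_ring_1 fls)"
  by (induction A rule: infinite_finite_induct) (auto simp: fls_const_add')

definition mkfls :: "(int \<Rightarrow> 'a::comm_ring_1) \<Rightarrow> int \<Rightarrow> 'a fls" where
  "mkfls g s = fls_shift (-s) (fps_to_fls (Abs_fps (\<lambda>i. g (s + int i))))"

lemma mkfls_nth: "mkfls g s $$ k = (if k < s then 0 else g k)"
  by (simp add: mkfls_def)

lemma const_lift:
  fixes K :: "'a::field set"
  assumes K: "is_subfield K" and Bs: "finite Bs" and x: "x \<in> lspan K Bs"
  shows "fls_const x \<in> lspan (laurent_over K) (fls_const ` Bs)"
proof -
  have E: "is_subfield (laurent_over K)" by (rule laurent_over_subfield[OF K])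
  obtain c where c: "x = (\<Sum>b\<in>Bs. c b * b)" "\<forall>b\<in>Bs. c b \<in> K" using x unfolding lspan_def by auto
  have "fls_const x = (\<Sum>b\<in>Bs. fls_const (c b) * fls_const b)" by (simp add: c fls_const_sum')
  also have "\<dots> \<in> lspan (laurent_over K) (fls_const ` Bs)"
    by (rule lspan_sum[OF E], rule lspan_smult[OF E]) (use Bs c K in \<open>auto intro: lspan_gen[OF E] laurent_over_const\<close>)
  finally show ?thesis .
qed

lemma sufficiency:
  fixes K :: "'a::field set" and \<sigma> :: "'a fls"
  assumes K: "is_subfield K"
    and fd: "finite_degree K (gen_field (K \<union> frob_pow_set n (gen_field (K \<union> range (fls_nth \<sigma>)))))"
  shows "algebraic_over (laurent_over K) \<sigma>"
proof -
  define L where "L = gen_field (K \<union> range (fls_nth \<sigma>))"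
  define M where "M = gen_field (K \<union> frob_pow_set n L)"
  obtain Bs where Bs: "finite Bs" "Bs \<subseteq> M" "M \<subseteq> lspan K Bs"
    using fd unfolding finite_degree_lspan M_def L_def by blast
  define q where "q = frq CHAR('a) n"
  have qpos: "q > 0" unfolding q_def by (rule frq_pos)
  define \<tau> where "\<tau> = \<sigma> ^ q"
  have Mf: "is_subfield M" unfolding M_def by (rule gen_field_subfield)
  have supM: "K \<union> frob_pow_set n L \<subseteq> M" unfolding M_def by (rule gen_field_sup)
  have supL: "K \<union> range (fls_nth \<sigma>) \<subseteq> L" unfolding L_def by (rule gen_field_sup)
  have coeffM: "\<tau> $$ k \<in> M" for k
  proof (cases "int q dvd k")
    case True
    have "\<sigma> $$ (k div int q) \<in> L" using supL by blast
    then have "(\<sigma> $$ (k div int q)) ^ q \<in> frob_pow_set n L" unfolding frob_image q_def by blast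
    then show ?thesis using True supM unfolding \<tau>_def q_def by (auto simp: frob_nth)
  next
    case False
    then show ?thesis using subfieldD(1)[OF Mf] unfolding \<tau>_def q_def by (simp add: frob_nth)
  qed
  define E where "E = laurent_over K"
  have E: "is_subfield E" unfolding E_def by (rule laurent_over_subfield[OF K])
  define Bf where "Bf = (fls_const ` Bs :: 'a fls set)"
  have fBf: "finite Bf" using Bs unfolding Bf_def by simp
  have lift: "fls_const x \<in> lspan E Bf" if "x \<in> M" for x
    unfolding E_def Bf_def by (rule const_lift[OF K Bs(1)]) (use that Bs in blast)
  have "\<forall>k. \<exists>c. (\<forall>b\<in>Bs. c b \<in> K) \<and> \<tau> $$ k = (\<Sum>b\<in>Bs. c b * b)"
    using coeffM Bs(3) unfolding lspan_def by blast
  then obtain cc where cc: "\<And>k. (\<forall>b\<in>Bs. cc k b \<in> K) \<and> \<tau> $$ k = (\<Sum>b\<in>Bs. cc k b * b)" by metis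
  define s where "s = fls_subdegree \<tau>"
  define g where "g b = mkfls (\<lambda>k. cc k b) s" for b
  have gE: "g b \<in> E" if "b \<in> Bs" for b
    unfolding E_def g_def using cc that subfieldD(1)[OF K] by (intro laurent_overI) (auto simp: mkfls_nth)
  have tau_eq: "\<tau> = (\<Sum>b\<in>Bs. g b * fls_const b)"
  proof (subst fls_eq_iff, intro allI)
    fix k
    have "(\<Sum>b\<in>Bs. g b * fls_const b) $$ k = (\<Sum>b\<in>Bs. b * g b $$ k)"
      by (simp add: fls_nth_sum mult.commute[of _ "fls_const _"])
    also have "\<dots> = \<tau> $$ k"
    proof (cases "k < s")
      case True then show ?thesis by (simp add: g_def mkfls_nth s_def)
    next
      case False
      then have "(\<Sum>b\<in>Bs. b * g b $$ k) = (\<Sum>b\<in>Bs. cc k b * b)" by (simp add: g_def mkfls_nth mult.commute)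
      then show ?thesis using cc[of k] by simp
    qed
    finally show "\<tau> $$ k = (\<Sum>b\<in>Bs. g b * fls_const b) $$ k" by simp
  qed
  have tauL: "\<tau> \<in> lspan E Bf"
    unfolding tau_eq
    by (rule lspan_sum[OF E], rule lspan_smult[OF E]) (use gE Bs(1) in \<open>auto simp: Bf_def intro: lspan_gen[OF E]\<close>)
  have BB: "b * b' \<in> lspan E Bf" if bb: "b \<in> Bf" "b' \<in> Bf" for b b'
  proof -
    obtain x where x: "x \<in> Bs" "b = fls_const x" using bb(1) unfolding Bf_def by blast
    obtain x' where x': "x' \<in> Bs" "b' = fls_const x'" using bb(2) unfolding Bf_def by blast
    have xx: "x \<in> Bs" "x' \<in> Bs" "b = fls_const x" "b' = fls_const x'" using x x' by auto
    have "x * x' \<in> M" using xx Bs(2) Mf by (auto intro: subfieldD)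
    then show ?thesis using lift xx by simp
  qed
  have one: "1 \<in> lspan E Bf" using lift[OF subfieldD(2)[OF Mf]] by simp
  have pw: "\<tau> ^ j \<in> lspan E Bf" for j
    by (induction j) (use one lspan_mult[OF E BB tauL] in auto)
  define cB where "cB = card Bs"
  have "card Bf \<le> cB" unfolding Bf_def cB_def by (rule card_image_le[OF Bs(1)])
  then have cJ: "card {..cB} > card Bf" by simp
  obtain c where c: "\<forall>j\<in>{..cB}. c j \<in> E" "\<exists>j\<in>{..cB}. c j \<noteq> 0" "(\<Sum>j\<in>{..cB}. c j * \<tau> ^ j) = 0"
    using lin_dep[OF E fBf finite_atMost cJ, of "\<lambda>j. \<tau> ^ j"] pw by blast
  obtain j0 where j0: "j0 \<le> cB" "c j0 \<noteq> 0" using c(2) by auto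
  define R where "R = (\<Sum>j\<le>cB. monom (c j) (q * j))"
  have cR: "coeff R i = (\<Sum>j\<le>cB. if q * j = i then c j else 0)" for i
    by (simp add: R_def coeff_sum coeff_monom)
  have "coeff R (q * j0) = (\<Sum>j\<le>cB. if j = j0 then c j else 0)"
    unfolding cR by (rule sum.cong) (use qpos in auto)
  also have "\<dots> = c j0" using j0 by simp
  finally have "R \<noteq> 0" using j0 by auto
  moreover have "\<forall>i. coeff R i \<in> E" unfolding cR using c(1) E by (auto intro!: subfield_sum subfieldD(1))
  moreover have "poly R \<sigma> = 0"
  proof -
    have "poly R \<sigma> = (\<Sum>j\<le>cB. c j * \<sigma> ^ (q * j))" by (simp add: R_def poly_sum poly_monom)
    also have "\<dots> = (\<Sum>j\<le>cB. c j * \<tau> ^ j)" by (simp add: \<tau>_def power_mult)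
    finally show ?thesis using c(3) by simp
  qed
  ultimately show ?thesis unfolding algebraic_over_def E_def by blast
qed


theorem theorem2p5:
  fixes K :: "'a::alg_closed_field set" and \<sigma> :: "'a fls"
  assumes "is_subfield K"
    and "\<forall>a::'a. algebraic_over K a"
  shows "algebraic_over (laurent_over K) \<sigma> \<longleftrightarrow>
    (\<exists>n::nat. finite_degree K
       (gen_field (K \<union> frob_pow_set n (gen_field (K \<union> range (fls_nth \<sigma>))))))"
proof
  assume "algebraic_over (laurent_over K) \<sigma>"
  then show "\<exists>n::nat. finite_degree K
       (gen_field (K \<union> frob_pow_set n (gen_field (K \<union> range (fls_nth \<sigma>)))))"
    by (rule necessity[OF assms(1) assms(2)])
next
  assume "\<exists>n::nat. finite_degree K
       (gen_field (K \<union> frob_pow_set n (gen_field (K \<union> range (fls_nth \<sigma>)))))"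
  then obtain n where "finite_degree K
       (gen_field (K \<union> frob_pow_set n (gen_field (K \<union> range (fls_nth \<sigma>)))))" by blast
  then show "algebraic_over (laurent_over K) \<sigma>" by (rule sufficiency[OF assms(1)])
qed

end
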